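(* Let $A$ be a system of $n_A$ qubits and $B$ a system of $n_B$ qubits, let $\rho_{A_1B_1}$ be a state at time $t_1$, and let $\mathcal{P}$ be a CPTP map from $AB$ at time $t_1$ to $AB$ at time $t_2$. Let $R_{A_1B_1A_2B_2}$ be the two-time pseudo-density matrix of the full system $AB$ and $R_{A_1B_2}$ the pseudo-density matrix constructed from measurements on $A$ at $t_1$ and on $B$ at $t_2$ (both defined in the context). Then $R_{A_1B_2}=\mathrm{Tr}_{B_1A_2}R_{A_1B_1A_2B_2}$.
   Context: Pauli matrices $\sigma_0=\mathbb{1},\sigma_1,\sigma_2,\sigma_3$; multi-qubit Pauli matrices are tensor products of these. The coarse-grained measurement of a Pauli matrix $\Sigma$ on $AB$ is $\{(\mathbb{1}\pm\Sigma)/2\}$ with outcomes $\pm1$ and Lüders update $\rho\mapsto P_\pm\rho P_\pm$. For Paulis $\Sigma_1,\Sigma_2$ on $AB$, $\langle\Sigma_1,\Sigma_2\rangle$ is the expected product of outcomes in: prepare $\rho_{A_1B_1}$, coarse-grained measurement of $\Sigma_1$ at $t_1$, apply $\mathcal{P}$, coarse-grained measurement of $\Sigma_2$ at $t_2$. Then $R_{A_1B_1A_2B_2}=2^{-2(n_A+n_B)}\sum \langle\sigma_i^{A}\otimes\sigma_j^{B},\sigma_k^{A}\otimes\sigma_l^{B}\rangle\,\sigma_i^{A_1}\otimes\sigma_j^{B_1}\otimes\sigma_k^{A_2}\otimes\sigma_l^{B_2}$ (sum over all multi-qubit Paulis $\sigma_i,\sigma_k$ on $A$ and $\sigma_j,\sigma_l$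 on $B$), and $R_{A_1B_2}=2^{-(n_A+n_B)}\sum_{i,l}\langle\sigma_i^A\otimes\mathbb{1}_B,\mathbb{1}_A\otimes\sigma_l^B\rangle\,\sigma_i^{A_1}\otimes\sigma_l^{B_2}$. *)

theory Defs
  imports Complex_Main "Jordan_Normal_Form.Matrix"
begin

definition tr :: "complex mat \<Rightarrow> complex" where
  "tr M = (\<Sum>i<dim_row M. M $$ (i, i))"

text \<open>Kronecker (tensor) product, standard ordering: row index of A is the
  more significant digit, i.e. (A \<otimes> B)(a*rB+b, a'*cB+b') = A(a,a') B(b,b').\<close>
definition kron :: "complex mat \<Rightarrow> complex mat \<Rightarrow> complex mat" where
  "kron A B = mat (dim_row A * dim_row B) (dim_col A * dim_col B)
     (\<lambda>(i, j). A $$ (i div dim_row B, j div dim_col B) * B $$ (i mod dim_row B, j mod dim_col B))"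

definition psd :: "nat \<Rightarrow> complex mat \<Rightarrow> bool" where
  "psd d M \<longleftrightarrow> M \<in> carrier_mat d d \<and>
     (\<forall>v \<in> carrier_vec d. let q = (\<Sum>i<d. cnj (v $ i) * (M *\<^sub>v v) $ i) in Im q = 0 \<and> 0 \<le> Re q)"

definition density :: "nat \<Rightarrow> complex mat \<Rightarrow> bool" where
  "density d \<rho> \<longleftrightarrow> psd d \<rho> \<and> tr \<rho> = 1"

text \<open>(id_k \<otimes> \<Phi>) applied to a (k*d) x (k*d) matrix, acting blockwise.\<close>
definition ampl :: "nat \<Rightarrow> nat \<Rightarrow> (complex mat \<Rightarrow> complex mat) \<Rightarrow> complex mat \<Rightarrow> complex mat" where
  "ampl k d \<Phi> X = mat (k * d) (k * d)
     (\<lambda>(i, j). \<Phi> (mat d d (\<lambda>(r, c). X $$ (i div d * d + r, j div d * d + c))) $$ (i mod d, j mod d))"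

definition cptp :: "nat \<Rightarrow> (complex mat \<Rightarrow> complex mat) \<Rightarrow> bool" where
  "cptp d \<Phi> \<longleftrightarrow>
     (\<forall>X \<in> carrier_mat d d. \<Phi> X \<in> carrier_mat d d) \<and>
     (\<forall>X \<in> carrier_mat d d. \<forall>Y \<in> carrier_mat d d. \<Phi> (X + Y) = \<Phi> X + \<Phi> Y) \<and>
     (\<forall>X \<in> carrier_mat d d. \<forall>c. \<Phi> (c \<cdot>\<^sub>m X) = c \<cdot>\<^sub>m \<Phi> X) \<and>
     (\<forall>X \<in> carrier_mat d d. tr (\<Phi> X) = tr X) \<and>
     (\<forall>k>0. \<forall>X. psd (k * d) X \<longrightarrow> psd (k * d) (ampl k d \<Phi> X))"

definition sigma :: "nat \<Rightarrow> complex mat" where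
  "sigma k = (if k = 1 then mat_of_rows_list 2 [[0, 1], [1, 0]]
     else if k = 2 then mat_of_rows_list 2 [[0, -\<i>], [\<i>, 0]]
     else if k = 3 then mat_of_rows_list 2 [[1, 0], [0, -1]]
     else 1\<^sub>m 2)"

definition pauli_strings :: "nat \<Rightarrow> nat list set" where
  "pauli_strings n = {ps. length ps = n \<and> set ps \<subseteq> {0..<4}}"

definition pauli :: "nat list \<Rightarrow> complex mat" where
  "pauli ps = foldr (\<lambda>k M. kron (sigma k) M) ps (1\<^sub>m 1)"

abbreviation idp :: "nat \<Rightarrow> nat list" where
  "idp n \<equiv> replicate n 0"

text \<open>Projector (1 + s \<Sigma>)/2 for outcome s = +1/-1.\<close>
definition cg_proj :: "nat \<Rightarrow> complex mat \<Rightarrow> int \<Rightarrow> complex mat" where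
  "cg_proj d S s = (1 / 2 :: complex) \<cdot>\<^sub>m (1\<^sub>m d + of_int s \<cdot>\<^sub>m S)"

text \<open>Expected product of outcomes: prepare \<rho>, coarse-grained measurement of S1
  (Lueders update), apply \<Phi>, coarse-grained measurement of S2.\<close>
definition corr :: "nat \<Rightarrow> complex mat \<Rightarrow> (complex mat \<Rightarrow> complex mat) \<Rightarrow> complex mat \<Rightarrow> complex mat \<Rightarrow> complex" where
  "corr d \<rho> \<Phi> S1 S2 = (\<Sum>s1\<in>{1, -1::int}. \<Sum>s2\<in>{1, -1::int}.
      of_int (s1 * s2) *
      tr (cg_proj d S2 s2 * \<Phi> (cg_proj d S1 s1 * \<rho> * cg_proj d S1 s1) * cg_proj d S2 s2))"

definition pAB :: "nat list \<Rightarrow> nat list \<Rightarrow> complex mat" where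
  "pAB i j = kron (pauli i) (pauli j)"

text \<open>Two-time PDM on A1 B1 A2 B2 (tensor order A1, B1, A2, B2).\<close>
definition R4 :: "nat \<Rightarrow> nat \<Rightarrow> complex mat \<Rightarrow> (complex mat \<Rightarrow> complex mat) \<Rightarrow> complex mat" where
  "R4 nA nB \<rho> \<Phi> = (let D = 2 ^ nA * 2 ^ nB in
     mat (D * D) (D * D) (\<lambda>(r, c).
       (1 / 2 ^ (2 * (nA + nB))) *
       (\<Sum>i\<in>pauli_strings nA. \<Sum>j\<in>pauli_strings nB. \<Sum>k\<in>pauli_strings nA. \<Sum>l\<in>pauli_strings nB.
          corr D \<rho> \<Phi> (pAB i j) (pAB k l) *
          kron (kron (kron (pauli i) (pauli j)) (pauli k)) (pauli l) $$ (r, c))))"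

text \<open>PDM on A1 B2 from measurements of A at t1 and B at t2 (tensor order A1, B2).\<close>
definition R2 :: "nat \<Rightarrow> nat \<Rightarrow> complex mat \<Rightarrow> (complex mat \<Rightarrow> complex mat) \<Rightarrow> complex mat" where
  "R2 nA nB \<rho> \<Phi> = (let D = 2 ^ nA * 2 ^ nB in
     mat D D (\<lambda>(r, c).
       (1 / 2 ^ (nA + nB)) *
       (\<Sum>i\<in>pauli_strings nA. \<Sum>l\<in>pauli_strings nB.
          corr D \<rho> \<Phi> (pAB i (idp nB)) (pAB (idp nA) l) *
          kron (pauli i) (pauli l) $$ (r, c))))"

text \<open>Partial trace over the middle factor Y of X \<otimes> Y \<otimes> Z (dimensions dX, dY, dZ).\<close>
definition ptrace_mid :: "nat \<Rightarrow> nat \<Rightarrow> nat \<Rightarrow> complex mat \<Rightarrow> complex mat" where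
  "ptrace_mid dX dY dZ M = mat (dX * dZ) (dX * dZ) (\<lambda>(i, j).
     \<Sum>y<dY. M $$ ((i div dZ * dY + y) * dZ + i mod dZ, (j div dZ * dY + y) * dZ + j mod dZ))"

end

theory Submission
  imports Defs
begin


lemma sum_split_prod: "(\<Sum>i<a*b. g i) = (\<Sum>p<a. \<Sum>q<b. g (p*b+q))" for a b :: nat
proof -
  have "(\<Sum>i<a*b. g i) = (\<Sum>p<a. sum g {p*b..<p*b+b})"
    using sum.nat_group[of g b a] by simp
  also have "\<dots> = (\<Sum>p<a. \<Sum>q<b. g (p*b+q))"
  proof (rule sum.cong[OF refl])
    fix p
    show "sum g {p*b..<p*b+b} = (\<Sum>q<b. g (p*b+q))"
      using sum.shift_bounds_nat_ivl[of g 0 "p*b" b]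
      by (simp add: atLeast0LessThan add.commute)
  qed
  finally show ?thesis .
qed

lemma idx_bound: "p < a \<Longrightarrow> q < b \<Longrightarrow> p*b+q < a*(b::nat)"
proof -
  assume "p < a" "q < b"
  have "p*b+q < (p+1)*b" using \<open>q < b\<close> by simp
  also have "(p+1)*b \<le> a*b" by (rule mult_le_mono1) (use \<open>p < a\<close> in simp)
  finally show ?thesis .
qed

lemma kron_dims[simp]: "dim_row (kron A B) = dim_row A * dim_row B" "dim_col (kron A B) = dim_col A * dim_col B"
  by (simp_all add: kron_def)

lemma kron_index:
  assumes "p < dim_row A" "q < dim_row B" "p' < dim_col A" "q' < dim_col B"
  shows "kron A B $$ (p * dim_row B + q, p' * dim_col B + q') = A $$ (p, p') * B $$ (q, q')"
  using assms idx_bound[of p "dim_row A" q "dim_row B"] idx_bound[of p' "dim_col A" q' "dim_col B"]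
  by (simp add: kron_def)

lemma sigma_dims[simp]: "dim_row (sigma k) = 2" "dim_col (sigma k) = 2"
  by (auto simp: sigma_def mat_of_rows_list_def)

lemma sigma_carrier: "sigma k \<in> carrier_mat 2 2"
  unfolding carrier_mat_def by simp

lemma pauli_Cons: "pauli (k # ps) = kron (sigma k) (pauli ps)"
  by (simp add: pauli_def)

lemma pauli_dims: "dim_row (pauli ps) = 2 ^ length ps \<and> dim_col (pauli ps) = 2 ^ length ps"
proof (induction ps)
  case Nil
  then show ?case by (simp add: pauli_def)
next
  case (Cons k ps)
  then show ?case by (simp only: pauli_Cons kron_dims sigma_dims list.size power_Suc) simp
qed

lemma pauli_carrier: "pauli ps \<in> carrier_mat (2 ^ length ps) (2 ^ length ps)"
  unfolding carrier_mat_def using pauli_dims[of ps] by blast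

lemma tr_kron:
  assumes "A \<in> carrier_mat a a" "B \<in> carrier_mat b b"
  shows "tr (kron A B) = tr A * tr B"
proof -
  have "tr (kron A B) = (\<Sum>p<a. \<Sum>q<b. kron A B $$ (p*b+q, p*b+q))"
    using assms by (simp add: tr_def sum_split_prod)
  also have "\<dots> = (\<Sum>p<a. \<Sum>q<b. A $$ (p,p) * B $$ (q,q))"
    using assms kron_index[of _ A _ B] by (auto intro!: sum.cong)
  also have "\<dots> = tr A * tr B"
    using assms by (simp add: tr_def sum_product)
  finally show ?thesis .
qed

lemma tr_sigma: "tr (sigma k) = (if k \<in> {1,2,3} then 0 else 2)"
  by (auto simp: tr_def sigma_def mat_of_rows_list_def numeral_2_eq_2 lessThan_Suc)

lemma tr_pauli: "tr (pauli ps) = (if \<forall>k\<in>set ps. k \<notin> {1,2,3} then 2 ^ length ps else 0)"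
proof (induction ps)
  case Nil
  then show ?case by (simp add: pauli_def tr_def)
next
  case (Cons a ps)
  have "tr (pauli (a # ps)) = tr (sigma a) * tr (pauli ps)"
    unfolding pauli_Cons by (rule tr_kron[OF sigma_carrier pauli_carrier])
  then show ?case using Cons by (simp add: tr_sigma)
qed

lemma tr_pauli_strings:
  assumes "ps \<in> pauli_strings n"
  shows "tr (pauli ps) = (if ps = idp n then 2 ^ n else 0)"
proof -
  have len: "length ps = n" and s: "set ps \<subseteq> {0..<4}" using assms by (auto simp: pauli_strings_def)
  have "(\<forall>k\<in>set ps. k \<notin> {1,2,3}) \<longleftrightarrow> ps = idp n"
  proof
    assume h: "\<forall>k\<in>set ps. k \<notin> {1,2,3}"
    then have "\<forall>k\<in>set ps. k = 0" using s by fastforce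
    then show "ps = idp n" using len replicate_length_same by metis
  qed auto
  then show ?thesis using len by (simp add: tr_pauli)
qed

lemma finite_ps: "finite (pauli_strings n)"
proof -
  have e: "pauli_strings n = {xs. set xs \<subseteq> {0..<4} \<and> length xs = n}"
    unfolding pauli_strings_def by (rule Collect_cong) (rule conj_commute)
  show ?thesis unfolding e by (rule finite_lists_length_eq) (rule finite_atLeastLessThan)
qed

lemma idp_in: "idp n \<in> pauli_strings n" by (auto simp: pauli_strings_def)


lemma mid_lemma:
  assumes A: "A \<in> carrier_mat dX dX" and B: "B \<in> carrier_mat d1 d1" and C: "C \<in> carrier_mat d2 d2"
    and D: "Dm \<in> carrier_mat dZ dZ" and r: "r < dX * dZ" and c: "c < dX * dZ"
  shows "(\<Sum>y<d1*d2. kron (kron (kron A B) C) Dm $$ ((r div dZ * (d1*d2) + y) * dZ + r mod dZ,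
                                                   (c div dZ * (d1*d2) + y) * dZ + c mod dZ))
        = tr B * tr C * kron A Dm $$ (r, c)"
proof -
  have dZ: "dZ > 0" using r by (cases dZ) auto
  have rd: "r div dZ < dX" "c div dZ < dX" using r c dZ by (auto simp: less_mult_imp_div_less)
  have rm: "r mod dZ < dZ" "c mod dZ < dZ" using dZ by auto
  have e: "\<And>x u v. x * (d1*d2) + (u*d2+v) = (x*d1+u)*d2+v" by (simp add: algebra_simps)
  have "(\<Sum>y<d1*d2. kron (kron (kron A B) C) Dm $$ ((r div dZ * (d1*d2) + y) * dZ + r mod dZ,
                                                   (c div dZ * (d1*d2) + y) * dZ + c mod dZ))
    = (\<Sum>u<d1. \<Sum>v<d2. kron (kron (kron A B) C) Dm $$ (((r div dZ * d1 + u) * d2 + v) * dZ + r mod dZ,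
                                                   ((c div dZ * d1 + u) * d2 + v) * dZ + c mod dZ))"
    by (simp add: sum_split_prod e)
  also have "\<dots> = (\<Sum>u<d1. \<Sum>v<d2. A $$ (r div dZ, c div dZ) * B $$ (u,u) * C $$ (v,v) * Dm $$ (r mod dZ, c mod dZ))"
  proof (intro sum.cong refl)
    fix u v assume u: "u \<in> {..<d1}" and v: "v \<in> {..<d2}"
    have b1: "(r div dZ * d1 + u) * d2 + v < dX * d1 * d2" "(c div dZ * d1 + u) * d2 + v < dX * d1 * d2"
      "r div dZ * d1 + u < dX * d1" "c div dZ * d1 + u < dX * d1"
      using idx_bound rd u v by auto
    show "kron (kron (kron A B) C) Dm $$ (((r div dZ * d1 + u) * d2 + v) * dZ + r mod dZ,
                                                   ((c div dZ * d1 + u) * d2 + v) * dZ + c mod dZ)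
         = A $$ (r div dZ, c div dZ) * B $$ (u,u) * C $$ (v,v) * Dm $$ (r mod dZ, c mod dZ)"
      using A B C D b1 rd rm u v
        kron_index[of "(r div dZ * d1 + u) * d2 + v" "kron (kron A B) C" "r mod dZ" Dm "(c div dZ * d1 + u) * d2 + v" "c mod dZ"]
        kron_index[of "r div dZ * d1 + u" "kron A B" v C "c div dZ * d1 + u" v]
        kron_index[of "r div dZ" A u B "c div dZ" u]
      by simp
  qed
  also have "\<dots> = tr B * tr C * (A $$ (r div dZ, c div dZ) * Dm $$ (r mod dZ, c mod dZ))"
  proof -
    let ?K = "A $$ (r div dZ, c div dZ) * Dm $$ (r mod dZ, c mod dZ)"
    have "(\<Sum>u<d1. \<Sum>v<d2. A $$ (r div dZ, c div dZ) * B $$ (u,u) * C $$ (v,v) * Dm $$ (r mod dZ, c mod dZ))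
       = (\<Sum>u<d1. \<Sum>v<d2. (B $$ (u,u) * C $$ (v,v)) * ?K)"
      by (intro sum.cong refl) (simp add: mult_ac)
    also have "\<dots> = (\<Sum>u<d1. \<Sum>v<d2. B $$ (u,u) * C $$ (v,v)) * ?K"
      by (simp only: sum_distrib_right)
    also have "(\<Sum>u<d1. \<Sum>v<d2. B $$ (u,u) * C $$ (v,v)) = tr B * tr C"
      using B C unfolding tr_def sum_product by simp
    finally show ?thesis .
  qed
  also have "A $$ (r div dZ, c div dZ) * Dm $$ (r mod dZ, c mod dZ) = kron A Dm $$ (r, c)"
    using A D r c by (simp add: kron_def)
  finally show ?thesis .
qed



lemma swap4:
  "(\<Sum>y\<in>Y. \<Sum>i\<in>I. \<Sum>j\<in>J. \<Sum>k\<in>K. \<Sum>l\<in>L. F i j k l y) = (\<Sum>i\<in>I. \<Sum>j\<in>J. \<Sum>k\<in>K. \<Sum>l\<in>L. \<Sum>y\<in>Y. F i j k l y)"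
  apply (rule trans[OF sum.swap], rule sum.cong[OF refl])
  apply (rule trans[OF sum.swap], rule sum.cong[OF refl])
  apply (rule trans[OF sum.swap], rule sum.cong[OF refl])
  apply (rule sum.swap)
  done

lemma collapse:
  fixes f :: "'a \<Rightarrow> complex"
  assumes "finite S" "a \<in> S"
  shows "(\<Sum>j\<in>S. (if j = a then x else 0) * f j) = x * f a"
proof -
  have "\<And>j. (if j = a then x else 0) * f j = (if j = a then x * f a else 0)" by simp
  then show ?thesis using assms by simp
qed

theorem mainTheorem5:
  fixes nA nB :: nat and \<rho> :: "complex mat" and \<P> :: "complex mat \<Rightarrow> complex mat"
  assumes "density (2 ^ nA * 2 ^ nB) \<rho>"
    and "cptp (2 ^ nA * 2 ^ nB) \<P>"
  shows "R2 nA nB \<rho> \<P> = ptrace_mid (2 ^ nA) (2 ^ nB * 2 ^ nA) (2 ^ nB) (R4 nA nB \<rho> \<P>)"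
proof -
  let ?dA = "2 ^ nA :: nat"
  let ?dB = "2 ^ nB :: nat"
  let ?D = "?dA * ?dB"
  let ?c4 = "(1::complex) / 2 ^ (2 * (nA + nB))"
  let ?idx = "\<lambda>r y. (r div ?dB * (?dB * ?dA) + y) * ?dB + r mod ?dB"
  let ?K = "\<lambda>i j k l. kron (kron (kron (pauli i) (pauli j)) (pauli k)) (pauli l)"
  let ?PS = pauli_strings
  let ?cr = "\<lambda>i j k l. corr ?D \<rho> \<P> (pAB i j) (pAB k l)"
  show ?thesis
  proof (rule eq_matI)
    show "dim_row (R2 nA nB \<rho> \<P>) = dim_row (ptrace_mid (2 ^ nA) (2 ^ nB * 2 ^ nA) (2 ^ nB) (R4 nA nB \<rho> \<P>))"
      "dim_col (R2 nA nB \<rho> \<P>) = dim_col (ptrace_mid (2 ^ nA) (2 ^ nB * 2 ^ nA) (2 ^ nB) (R4 nA nB \<rho> \<P>))"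
      by (simp_all add: R2_def ptrace_mid_def Let_def)
    fix r c
    assume "r < dim_row (ptrace_mid (2 ^ nA) (2 ^ nB * 2 ^ nA) (2 ^ nB) (R4 nA nB \<rho> \<P>))"
      "c < dim_col (ptrace_mid (2 ^ nA) (2 ^ nB * 2 ^ nA) (2 ^ nB) (R4 nA nB \<rho> \<P>))"
    then have r: "r < ?dA * ?dB" and c: "c < ?dA * ?dB" by (simp_all add: ptrace_mid_def)
    have bnd: "?idx x y < ?D * ?D" if "x < ?dA * ?dB" "y < ?dB * ?dA" for x y
    proof -
      have "x div ?dB < ?dA" using that(1) by (simp add: less_mult_imp_div_less)
      then have "x div ?dB * (?dB * ?dA) + y < ?dA * (?dB * ?dA)" using idx_bound that(2) by blast
      moreover have "x mod ?dB < ?dB" by simp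
      ultimately have "?idx x y < (?dA * (?dB * ?dA)) * ?dB" using idx_bound by blast
      also have "\<dots> = ?D * ?D" by (simp add: algebra_simps)
      finally show ?thesis .
    qed
    have "ptrace_mid (2 ^ nA) (2 ^ nB * 2 ^ nA) (2 ^ nB) (R4 nA nB \<rho> \<P>) $$ (r, c)
        = (\<Sum>y<?dB * ?dA. R4 nA nB \<rho> \<P> $$ (?idx r y, ?idx c y))"
      using r c by (simp add: ptrace_mid_def)
    also have "\<dots> = (\<Sum>y<?dB * ?dA. ?c4 * (\<Sum>i\<in>?PS nA. \<Sum>j\<in>?PS nB. \<Sum>k\<in>?PS nA. \<Sum>l\<in>?PS nB.
            ?cr i j k l * ?K i j k l $$ (?idx r y, ?idx c y)))"
    proof (rule sum.cong[OF refl])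
      fix y assume "y \<in> {..<?dB * ?dA}"
      then have "?idx r y < ?D * ?D" "?idx c y < ?D * ?D" using bnd r c by auto
      then show "R4 nA nB \<rho> \<P> $$ (?idx r y, ?idx c y) = ?c4 * (\<Sum>i\<in>?PS nA. \<Sum>j\<in>?PS nB. \<Sum>k\<in>?PS nA. \<Sum>l\<in>?PS nB.
            ?cr i j k l * ?K i j k l $$ (?idx r y, ?idx c y))"
        unfolding R4_def Let_def by (subst index_mat) auto
    qed
    also have "\<dots> = ?c4 * (\<Sum>i\<in>?PS nA. \<Sum>j\<in>?PS nB. \<Sum>k\<in>?PS nA. \<Sum>l\<in>?PS nB.
            ?cr i j k l * (\<Sum>y<?dB * ?dA. ?K i j k l $$ (?idx r y, ?idx c y)))"
      unfolding sum_distrib_left by (rule swap4)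
    also have "\<dots> = ?c4 * (\<Sum>i\<in>?PS nA. \<Sum>j\<in>?PS nB. \<Sum>k\<in>?PS nA. \<Sum>l\<in>?PS nB.
            ?cr i j k l * (tr (pauli j) * tr (pauli k) * kron (pauli i) (pauli l) $$ (r, c)))"
    proof (intro arg_cong[where f="\<lambda>z. ?c4 * z"] sum.cong refl arg_cong[where f="\<lambda>z. ?cr _ _ _ _ * z"])
      fix i j k l assume i: "i \<in> ?PS nA" and j: "j \<in> ?PS nB" and k: "k \<in> ?PS nA" and l: "l \<in> ?PS nB"
      have li: "length i = nA" "length j = nB" "length k = nA" "length l = nB"
        using i j k l by (auto simp: pauli_strings_def)
      show "(\<Sum>y<?dB * ?dA. ?K i j k l $$ (?idx r y, ?idx c y)) = tr (pauli j) * tr (pauli k) * kron (pauli i) (pauli l) $$ (r, c)"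
        using mid_lemma[of "pauli i" ?dA "pauli j" ?dB "pauli k" ?dA "pauli l" ?dB r c]
          pauli_carrier[of i] pauli_carrier[of j] pauli_carrier[of k] pauli_carrier[of l] li r c
        by (simp add: mult.commute)
    qed
    also have "\<dots> = ?c4 * (\<Sum>i\<in>?PS nA. \<Sum>j\<in>?PS nB. (if j = idp nB then 2 ^ nB else 0) * (\<Sum>k\<in>?PS nA. (if k = idp nA then 2 ^ nA else 0) * (\<Sum>l\<in>?PS nB.
            ?cr i j k l * kron (pauli i) (pauli l) $$ (r, c))))"
    proof -
      have "?c4 * (\<Sum>i\<in>?PS nA. \<Sum>j\<in>?PS nB. \<Sum>k\<in>?PS nA. \<Sum>l\<in>?PS nB.
            ?cr i j k l * (tr (pauli j) * tr (pauli k) * kron (pauli i) (pauli l) $$ (r, c)))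
          = ?c4 * (\<Sum>i\<in>?PS nA. \<Sum>j\<in>?PS nB. \<Sum>k\<in>?PS nA. \<Sum>l\<in>?PS nB.
            (if j = idp nB then 2 ^ nB else 0) * ((if k = idp nA then 2 ^ nA else 0) * (?cr i j k l * kron (pauli i) (pauli l) $$ (r, c))))"
        by (intro arg_cong[where f="\<lambda>z. ?c4 * z"] sum.cong refl) (simp add: tr_pauli_strings mult_ac)
      also have "\<dots> = ?c4 * (\<Sum>i\<in>?PS nA. \<Sum>j\<in>?PS nB. (if j = idp nB then 2 ^ nB else 0) * (\<Sum>k\<in>?PS nA. (if k = idp nA then 2 ^ nA else 0) * (\<Sum>l\<in>?PS nB.
            ?cr i j k l * kron (pauli i) (pauli l) $$ (r, c))))"
        by (simp only: sum_distrib_left)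
      finally show ?thesis .
    qed
    also have "\<dots> = ?c4 * (\<Sum>i\<in>?PS nA. 2 ^ nB * (2 ^ nA * (\<Sum>l\<in>?PS nB.
            ?cr i (idp nB) (idp nA) l * kron (pauli i) (pauli l) $$ (r, c))))"
      by (simp only: collapse finite_ps idp_in)
    also have "\<dots> = (1 / 2 ^ (nA + nB)) * (\<Sum>i\<in>?PS nA. \<Sum>l\<in>?PS nB.
            ?cr i (idp nB) (idp nA) l * kron (pauli i) (pauli l) $$ (r, c))"
    proof -
      have e1: "(1::complex) / 2 ^ (2 * (nA + nB)) * (2 ^ nB * 2 ^ nA) = 1 / 2 ^ (nA + nB)"
      proof -
        have "(2::complex) ^ (2 * (nA + nB)) = 2 ^ (nA + nB) * (2 ^ nB * 2 ^ nA)"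
          by (simp add: mult_2 power_add)
        then show ?thesis by simp
      qed
      have e2: "\<And>S. (\<Sum>i\<in>?PS nA. (2::complex) ^ nB * (2 ^ nA * S i)) = (2 ^ nB * 2 ^ nA) * (\<Sum>i\<in>?PS nA. S i)"
        by (simp add: sum_distrib_left mult.assoc)
      show ?thesis unfolding e2 by (subst mult.assoc[symmetric], subst e1, rule refl)
    qed
    also have "\<dots> = R2 nA nB \<rho> \<P> $$ (r, c)"
      using r c by (simp add: R2_def Let_def)
    finally show "R2 nA nB \<rho> \<P> $$ (r, c) = ptrace_mid (2 ^ nA) (2 ^ nB * 2 ^ nA) (2 ^ nB) (R4 nA nB \<rho> \<P>) $$ (r, c)"
      by simp
  qed
qed

end
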